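(* Every scattered polynomial $h(x)\in\mathbb{F}_{q^n}[x]$ in standard form is bijective as a map $\mathbb{F}_{q^n}\to\mathbb{F}_{q^n}$.
   Context: $q$ is a prime power, $n>1$. A $q$-polynomial $h(x)=\sum_{i=0}^{n-1}b_ix^{q^i}\in\mathbb{F}_{q^n}[x]$ is scattered if for all $y,z\in\mathbb{F}_{q^n}$, $zh(y)-yh(z)=0$ implies $y,z$ are $\mathbb{F}_q$-linearly dependent. Let $\Delta_h=\{(i-j)\bmod n\colon b_ib_j\neq0,\ i\neq j\}\cup\{n\}$ and $t_h=\gcd(\Delta_h)$; $h$ is in standard form if $t_h>1$. *)

theory Defs
  imports "HOL-Computational_Algebra.Primes"
begin

text \<open>The ambient field F_{q^n} is a finite field type 'a with CARD('a) = q^n;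
  the subfield F_q is the set of elements x with x^q = x.\<close>

definition Fq :: "nat \<Rightarrow> 'a::field set" where
  "Fq q = {x. x ^ q = x}"

definition qpoly :: "nat \<Rightarrow> nat \<Rightarrow> (nat \<Rightarrow> 'a::field) \<Rightarrow> 'a \<Rightarrow> 'a" where
  "qpoly q n b x = (\<Sum>i<n. b i * x ^ (q ^ i))"

definition Fq_lin_dep :: "nat \<Rightarrow> 'a::field \<Rightarrow> 'a \<Rightarrow> bool" where
  "Fq_lin_dep q y z \<longleftrightarrow>
     (\<exists>a c. a \<in> Fq q \<and> c \<in> Fq q \<and> (a \<noteq> 0 \<or> c \<noteq> 0) \<and> a * y + c * z = 0)"

definition scattered :: "nat \<Rightarrow> nat \<Rightarrow> (nat \<Rightarrow> 'a::field) \<Rightarrow> bool" where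
  "scattered q n b \<longleftrightarrow>
     (\<forall>y z. z * qpoly q n b y - y * qpoly q n b z = 0 \<longrightarrow> Fq_lin_dep q y z)"

definition Delta :: "nat \<Rightarrow> (nat \<Rightarrow> 'a::field) \<Rightarrow> nat set" where
  "Delta n b = {nat ((int i - int j) mod int n) | i j.
                  i < n \<and> j < n \<and> b i * b j \<noteq> 0 \<and> i \<noteq> j} \<union> {n}"

definition t_h :: "nat \<Rightarrow> (nat \<Rightarrow> 'a::field) \<Rightarrow> nat" where
  "t_h n b = Gcd (Delta n b)"

definition standard_form :: "nat \<Rightarrow> (nat \<Rightarrow> 'a::field) \<Rightarrow> bool" where
  "standard_form n b \<longleftrightarrow> t_h n b > 1"

end

theory Submission
  imports Defs "HOL-Computational_Algebra.Polynomial"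
begin

lemma fermat_ff:
  fixes x :: "'a::{finite,field}"
  assumes "x \<noteq> 0"
  shows "x ^ (card (UNIV :: 'a set) - 1) = 1"
proof -
  have "(\<Prod>y\<in>UNIV-{0}. x * y) = x ^ (card (UNIV :: 'a set) - 1) * \<Prod>(UNIV-{0})"
    by (simp add: prod.distrib mult_ac)
  also have "(\<Prod>y\<in>UNIV-{0}. x * y) = (\<Prod>y\<in>UNIV-{0}. y)"
    by (rule prod.reindex_bij_witness[of _ "\<lambda>y. y / x" "\<lambda>y. x * y"]) (use assms in auto)
  finally have "x ^ (card (UNIV :: 'a set) - 1) * \<Prod>(UNIV-{0::'a}) = 1 * \<Prod>(UNIV-{0::'a})" by simp
  moreover have "\<Prod>(UNIV-{0::'a}) \<noteq> 0" by (simp add: prod_zero_iff)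
  ultimately show ?thesis by (metis mult_right_cancel)
qed

lemma nat_geom_dvd:
  fixes a r :: nat
  assumes "a \<ge> 1"
  shows "a ^ r - 1 = (a - 1) * (\<Sum>j<r. a ^ j)"
proof -
  have "int (a ^ r - 1) = int a ^ r - 1" using assms by (simp add: of_nat_diff)
  also have "\<dots> = (int a - 1) * (\<Sum>j<r. int a ^ j)" by (rule power_diff_1_eq)
  also have "\<dots> = int ((a - 1) * (\<Sum>j<r. a ^ j))" using assms by (simp add: of_nat_diff)
  finally show ?thesis by linarith
qed

lemma exists_lambda:
  fixes q n t :: nat
  assumes card: "card (UNIV :: 'a::{finite,field} set) = q ^ n" and q2: "q \<ge> 2"
    and tn: "t dvd n" and t1: "t > 1" and n0: "n > 0"
  shows "\<exists>l::'a. l ^ (q ^ t) = l \<and> l ^ q \<noteq> l"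
proof -
  obtain r where nr: "n = t * r" using tn by blast
  have r1: "r \<ge> 1" using nr n0 by (cases r) auto
  define m where "m = q ^ t - 1"
  define d where "d = (\<Sum>j<r. (q ^ t) ^ j)"
  have qt: "q ^ t \<ge> q ^ 2" using t1 q2 by (intro power_increasing) auto
  have qq: "q ^ 2 > q" using q2 by (simp add: power2_eq_square)
  have m0: "m > 0" using qt qq q2 m_def by linarith
  have md: "m * d = q ^ n - 1"
    unfolding m_def d_def nr power_mult using qt qq nat_geom_dvd[of "q ^ t" r] by simp
  have qn: "q ^ n \<ge> 2" using q2 n0 by (metis le_trans power_increasing_iff power_one_right One_nat_def Suc_leI le_refl less_le_trans one_less_numeral_iff semiring_norm(76) power_increasing dual_order.trans)
  have d1: "d \<ge> 1" using md qn by (cases d) auto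
  define K where "K = {x::'a. x ^ m = 1}"
  define Q where "Q = (\<Sum>j<d. monom (1::'a) (j * m))"
  have polyQ: "poly Q x = (\<Sum>j<d. (x ^ m) ^ j)" for x
    unfolding Q_def by (simp add: poly_sum poly_monom mult.commute flip: power_mult)
  have degQ: "degree Q \<le> (d - 1) * m"
    unfolding Q_def by (rule degree_sum_le) (auto intro!: order.trans[OF degree_monom_le] simp: mult_le_mono1)
  have Q0: "Q \<noteq> 0"
  proof
    assume "Q = 0"
    then have "poly Q 0 = 0" by simp
    moreover have "poly Q 0 = 1" unfolding polyQ using d1 m0
      by (simp add: power_0_left sum.remove[of "{..<d}" 0] zero_power)
    ultimately show False by simp
  qed
  have sub: "UNIV - {0} \<subseteq> K \<union> {x. poly Q x = 0}"
  proof
    fix x :: 'a assume x: "x \<in> UNIV - {0}"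
    show "x \<in> K \<union> {x. poly Q x = 0}"
    proof (cases "x ^ m = 1")
      case True then show ?thesis by (simp add: K_def)
    next
      case False
      have "(x ^ m) ^ d = 1" using fermat_ff[of x] x card md by (simp flip: power_mult)
      then have "(x ^ m - 1) * (\<Sum>j<d. (x ^ m) ^ j) = 0" using power_diff_1_eq[of "x^m" d] by simp
      then show ?thesis using False by (simp add: polyQ)
    qed
  qed
  have "q ^ n - 1 = card (UNIV - {0::'a})" using card by (simp add: card_Diff_singleton)
  also have "\<dots> \<le> card (K \<union> {x. poly Q x = 0})" by (rule card_mono[OF _ sub]) simp
  also have "\<dots> \<le> card K + card {x. poly Q x = 0}" by (rule card_Un_le)
  also have "card {x. poly Q x = 0} \<le> (d - 1) * m" using card_poly_roots_bound[OF Q0] degQ by linarith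
  finally have cK: "card K \<ge> m" using md d1 by (cases d) (auto simp: algebra_simps)
  have "insert 0 K \<subseteq> {x::'a. x ^ (q ^ t) = x}"
  proof -
    have "q ^ t = Suc m" using m_def qt qq by simp
    then show ?thesis by (auto simp: K_def)
  qed
  note ins = this
  have "0 \<notin> K" using m0 by (simp add: K_def zero_power)
  then have "card (insert 0 K) = Suc (card K)" by (simp add: card_insert_if)
  moreover have "card (insert 0 K) \<le> card {x::'a. x ^ (q ^ t) = x}" by (rule card_mono[OF _ ins]) simp
  ultimately have c1: "card {x::'a. x ^ (q ^ t) = x} \<ge> q ^ t"
    using cK m0 m_def qt qq by linarith
  define P where "P = monom (1::'a) q - [:0,1:]"
  have P0: "P \<noteq> 0"
  proof
    assume "P = 0"
    then have "coeff P q = 0" by simp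
    then show False using q2 by (simp add: P_def coeff_pCons split: nat.splits)
  qed
  have "degree P \<le> q" unfolding P_def using q2
    by (intro degree_diff_le) (auto intro: order.trans[OF degree_monom_le] simp: degree_pCons_eq_if)
  then have c2: "card {x::'a. x ^ q = x} \<le> q"
    using card_poly_roots_bound[OF P0] by (simp add: P_def poly_monom)
  show ?thesis
  proof (rule ccontr)
    assume "\<not> ?thesis"
    then have "{x::'a. x ^ (q ^ t) = x} \<subseteq> {x. x ^ q = x}" by auto
    then have "card {x::'a. x ^ (q ^ t) = x} \<le> card {x::'a. x ^ q = x}" by (rule card_mono[rotated]) simp
    then show False using c1 c2 qt qq by linarith
  qed
qed
lemma char_dvd_card: "CHAR('a::{finite,field}) dvd card (UNIV :: 'a set)"
proof -
  have "(\<Sum>y\<in>(UNIV::'a set). 1 + y) = (\<Sum>y\<in>UNIV. y)"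
    by (rule sum.reindex_bij_witness[of _ "\<lambda>y. y - 1" "\<lambda>y. 1 + y"]) auto
  then have "of_nat (card (UNIV :: 'a set)) = (0::'a)" by (simp add: sum.distrib)
  then show ?thesis by (simp add: of_nat_eq_0_iff_char_dvd)
qed
lemma pow_period:
  fixes l :: "'a::field"
  assumes "l ^ (q ^ t) = l"
  shows "l ^ (q ^ (a + t * r)) = l ^ (q ^ a)"
proof (induction r)
  case (Suc r)
  have "l ^ (q ^ (a + t * Suc r)) = l ^ (q ^ (a + t * r) * q ^ t)"
    by (simp add: power_add algebra_simps)
  also have "\<dots> = (l ^ (q ^ t)) ^ (q ^ (a + t * r))" by (simp add: mult.commute flip: power_mult)
  also have "\<dots> = l ^ (q ^ a)" using assms Suc by simp
  finally show ?case .
qed simp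

lemma pow_period_int:
  fixes l :: "'a::field"
  assumes "l ^ (q ^ t) = l" "int t dvd (int i - int j)"
  shows "l ^ (q ^ i) = l ^ (q ^ j)"
proof (cases "j \<le> i")
  case True
  then have "int t dvd int (i - j)" using assms(2) by (simp add: of_nat_diff)
  then have "t dvd (i - j)" by presburger
  then obtain r where "i - j = t * r" by blast
  then have "i = j + t * r" using True by simp
  then show ?thesis using pow_period[OF assms(1)] by simp
next
  case False
  then have "int t dvd int (j - i)" using assms(2) by (simp add: of_nat_diff dvd_diff_commute)
  then have "t dvd (j - i)" by presburger
  then obtain r where "j - i = t * r" by blast
  then have "j = i + t * r" using False by simp
  then show ?thesis using pow_period[OF assms(1)] by simp
qed
theorem theorem4p5:
  fixes q n :: nat and b :: "nat \<Rightarrow> 'a::{finite,field}"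
  assumes "\<exists>p k. prime p \<and> k > 0 \<and> q = p ^ k"
    and "n > 1"
    and "card (UNIV :: 'a set) = q ^ n"
    and "scattered q n b"
    and "standard_form n b"
  shows "bij (qpoly q n b)"
proof -
  obtain p k where p: "prime p" and k: "k > 0" and qpk: "q = p ^ k" using assms(1) by blast
  have cpos: "CHAR('a) > 0" by (rule finite_imp_CHAR_pos) simp
  have cprime: "prime CHAR('a)" using prime_CHAR_semidom[OF cpos] .
  have "CHAR('a) dvd p ^ (k * n)" using char_dvd_card[where 'a='a] assms(3) qpk by (simp add: power_mult)
  then have "CHAR('a) dvd p" using cprime prime_dvd_power by blast
  then have cp: "CHAR('a) = p" using cprime p by (simp add: primes_dvd_imp_eq)
  have add: "(x + y) ^ (q ^ i) = x ^ (q ^ i) + y ^ (q ^ i)" for x y :: 'a and i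
    by (rule freshmans_dream'[OF cprime, of _ "k * i"]) (simp add: qpk cp power_mult)
  have sub: "(x - y) ^ (q ^ i) = x ^ (q ^ i) - y ^ (q ^ i)" for x y :: 'a and i
  proof -
    have "x ^ (q ^ i) = (x - y) ^ (q ^ i) + y ^ (q ^ i)" using add[of "x - y" y i] by simp
    then show ?thesis by (simp add: eq_diff_eq)
  qed
  have q2: "q \<ge> 2" using qpk k p
  proof -
    have "p \<ge> 2" using p prime_ge_2_nat by blast
    moreover have "p \<le> p ^ k" using k \<open>p \<ge> 2\<close> by (simp add: self_le_power)
    ultimately show ?thesis using qpk by linarith
  qed
  define h where "h = qpoly q n b"
  have hsub: "h (x - y) = h x - h y" for x y
    unfolding h_def qpoly_def by (simp add: sub right_diff_distrib sum_subtractf)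
  define t where "t = t_h n b"
  have t1: "t > 1" using assms(5) by (simp add: t_def standard_form_def)
  have tn: "t dvd n" unfolding t_def t_h_def by (rule Gcd_dvd) (simp add: Delta_def)
  obtain l :: 'a where l1: "l ^ (q ^ t) = l" and l2: "l ^ q \<noteq> l"
    using exists_lambda[OF assms(3) q2 tn t1] assms(2) by auto
  have per: "l ^ (q ^ i) = l ^ (q ^ j)" if "i < n" "j < n" "b i \<noteq> 0" "b j \<noteq> 0" for i j
  proof (cases "i = j")
    case False
    have "nat ((int i - int j) mod int n) \<in> Delta n b"
      unfolding Delta_def using that False by (intro UnI1 CollectI exI[of _ i] exI[of _ j]) simp
    then have "t dvd nat ((int i - int j) mod int n)" unfolding t_def t_h_def by (rule Gcd_dvd)
    then have "int t dvd int (nat ((int i - int j) mod int n))" by (simp only: int_dvd_int_iff)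
    moreover have "(int i - int j) mod int n \<ge> 0" using assms(2) by simp
    ultimately have "int t dvd (int i - int j) mod int n" by simp
    moreover have "int t dvd int n" using tn by simp
    ultimately have "int t dvd (int i - int j)"
      using dvd_mod_iff by blast
    then show ?thesis by (rule pow_period_int[OF l1])
  qed simp
  obtain mu where mu: "\<And>i. i < n \<Longrightarrow> b i \<noteq> 0 \<Longrightarrow> l ^ (q ^ i) = mu"
  proof (cases "\<exists>s<n. b s \<noteq> 0")
    case True
    then obtain s where "s < n" "b s \<noteq> 0" by blast
    then show ?thesis using that per by blast
  next
    case False
    then show ?thesis using that by blast
  qed
  have hl: "h (l * y) = mu * h y" for y
    unfolding h_def qpoly_def sum_distrib_left
  proof (rule sum.cong)
    fix i assume "i \<in> {..<n}"
    then show "b i * (l * y) ^ q ^ i = mu * (b i * y ^ q ^ i)"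
      using mu[of i] by (cases "b i = 0") (auto simp: power_mult_distrib)
  qed simp
  have ker: "w = 0" if hw: "h w = 0" for w
  proof (rule ccontr)
    assume w0: "w \<noteq> 0"
    have "(l * w) * h w - w * h (l * w) = 0" using hw hl by simp
    then have "Fq_lin_dep q w (l * w)" using assms(4) unfolding scattered_def h_def by blast
    then obtain a c where a: "a ^ q = a" and c: "c ^ q = c" and ac: "a \<noteq> 0 \<or> c \<noteq> 0"
      and e: "a * w + c * (l * w) = 0" unfolding Fq_lin_dep_def Fq_def by blast
    have "(a + c * l) * w = 0" using e by (simp add: algebra_simps)
    then have e2: "a + c * l = 0" using w0 by simp
    have c0: "c \<noteq> 0" using ac e2 by auto
    have cl: "c * l = - a" using e2 by (metis add.commute add_eq_0_iff)
    have leq: "l = - a / c" using cl c0 by (metis nonzero_mult_div_cancel_left)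
    have s0: "(- a + a) ^ (q ^ 1) = (- a) ^ (q ^ 1) + a ^ (q ^ 1)" by (rule add)
    have z: "(0::'a) ^ q = 0" using q2 by (simp add: zero_power)
    have "(- a) ^ q + a ^ q = 0" using s0 unfolding power_one_right by (simp only: add.left_inverse z)
    then have neg: "(- a) ^ q = - (a ^ q)" by (simp add: eq_neg_iff_add_eq_0)
    have "l ^ q = (- a) ^ q / c ^ q" unfolding leq by (rule power_divide)
    also have "\<dots> = l" using neg a c leq by simp
    finally have "l ^ q = l" .
    then show False using l2 by simp
  qed
  have "inj h"
  proof (rule injI)
    fix x y assume "h x = h y"
    then have "h (x - y) = 0" using hsub by simp
    then show "x = y" using ker by fastforce
  qed
  moreover have "surj h" by (rule finite_UNIV_inj_surj[OF _ \<open>inj h\<close>]) simp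
  ultimately show ?thesis unfolding h_def bij_def by simp
qed
end
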